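(* Let $m\le n$, $K\in\{0,\ldots,m-1\}$, $\gamma>0$, $\mathcal{C}\subset\mathrm{dom} f\subset\mathbb{R}^{m\times n}$ satisfy condition (C1), and suppose $f+\delta_{\mathcal C}$ is directionally differentiable and Lipschitz continuous on its domain $\mathcal C$ with constant $M$ with respect to the nuclear norm. Then every d-stationary point $X^*$ of $\min_X f(X)+\gamma\mathcal{T}_K(X)+\delta_{\mathcal C}(X)$ satisfies $\mathcal{T}_K(X^* )=0$ provided $\gamma>M$.
   Context: $\mathcal{T}_K(X)=\sum_{i=K+1}^{\min\{m,n\}}\sigma_i(X)$ (singular values in decreasing order); nuclear norm $\|X\|_*=\sum_i\sigma_i(X)$. $\delta_{\mathcal C}$ = indicator of $\mathcal C$. Feasible cone $\mathcal{F}(X;\mathcal{C})=\{D\mid \exists\varsigma'>0:\ X+\varsigma D\in\mathcal{C}\ \forall\varsigma\in(0,\varsigma')\}$. Directional differentiability: $h'(X;D)=\lim_{\varsigma\searrow0}(h(X+\varsigma D)-h(X))/\varsigma$ exists in $\mathbb R$ for $X\in\mathrm{dom}\,h$, $D\in\mathcal F(X;\mathrm{dom}\,h)$. Condition (C1): every $X\in\mathcal C$ has an SVD $X=U[\mathrm{diag}(\sigma_1(X),\ldots,\sigma_m(X)),0]V^\top$ with $-U[\mathrm{diag}(0,\ldots,0,\sigma_{K+1}(X),\ldots,\sigma_m(X)),0]V^\top\in\mathcal{F}(X;\mathcal C)$. $X^*$ is d-stationary if the objective's directional derivative at $X^*$ is $\ge0$ for all $D\in\mathcal F(X^*;\mathcal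 C)$. *)

theory Defs
  imports "HOL-Analysis.Analysis" "Jordan_Normal_Form.Matrix"
begin

text \<open>Real m x n matrices are JNF matrices of type real mat in carrier_mat m n.
  Indices are 0-based: the paper's sigma_i corresponds to svals X ! (i-1).\<close>

definition orth_mat :: "nat \<Rightarrow> real mat \<Rightarrow> bool" where
  "orth_mat k U \<longleftrightarrow> U \<in> carrier_mat k k \<and> transpose_mat U * U = 1\<^sub>m k"

definition rect_diag :: "nat \<Rightarrow> nat \<Rightarrow> real list \<Rightarrow> real mat" where
  "rect_diag m n s = mat m n (\<lambda>(i,j). if i = j \<and> i < length s then s ! i else 0)"

definition is_svd :: "real mat \<Rightarrow> real mat \<Rightarrow> real list \<Rightarrow> real mat \<Rightarrow> bool" where
  "is_svd X U s V \<longleftrightarrow>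
     (let m = dim_row X; n = dim_col X in
        orth_mat m U \<and> orth_mat n V \<and> length s = min m n \<and>
        (\<forall>i < length s. 0 \<le> s ! i) \<and> sorted_wrt (\<ge>) s \<and>
        X = U * rect_diag m n s * transpose_mat V)"

text \<open>Singular values sigma_1(X) \<ge> ... \<ge> sigma_{min m n}(X) (unique by SVD theory).\<close>
definition svals :: "real mat \<Rightarrow> real list" where
  "svals X = (THE s. \<exists>U V. is_svd X U s V)"

definition nuc_norm :: "real mat \<Rightarrow> real" where
  "nuc_norm X = sum_list (svals X)"

definition trunc_nuc :: "nat \<Rightarrow> real mat \<Rightarrow> real" where
  "trunc_nuc K X = sum_list (drop K (svals X))"

definition feas_cone :: "nat \<Rightarrow> nat \<Rightarrow> real mat \<Rightarrow> real mat set \<Rightarrow> real mat set" where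
  "feas_cone m n X C = {D \<in> carrier_mat m n. \<exists>t'>0. \<forall>t. 0 < t \<and> t < t' \<longrightarrow> X + t \<cdot>\<^sub>m D \<in> C}"

definition has_dir_deriv :: "(real mat \<Rightarrow> real) \<Rightarrow> real mat \<Rightarrow> real mat \<Rightarrow> real \<Rightarrow> bool" where
  "has_dir_deriv h X D L \<longleftrightarrow> ((\<lambda>t. (h (X + t \<cdot>\<^sub>m D) - h X) / t) \<longlongrightarrow> L) (at_right 0)"

text \<open>h + delta_C directionally differentiable on its domain C.\<close>
definition dir_diff_on :: "nat \<Rightarrow> nat \<Rightarrow> (real mat \<Rightarrow> real) \<Rightarrow> real mat set \<Rightarrow> bool" where
  "dir_diff_on m n h C \<longleftrightarrow> (\<forall>X\<in>C. \<forall>D\<in>feas_cone m n X C. \<exists>L. has_dir_deriv h X D L)"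

definition cond_C1 :: "nat \<Rightarrow> nat \<Rightarrow> nat \<Rightarrow> real mat set \<Rightarrow> bool" where
  "cond_C1 m n K C \<longleftrightarrow> (\<forall>X\<in>C. \<exists>U V. is_svd X U (svals X) V \<and>
      - (U * rect_diag m n (replicate K 0 @ drop K (svals X)) * transpose_mat V)
        \<in> feas_cone m n X C)"

text \<open>Along
  feasible directions delta_C vanishes for small t, so it is omitted from the quotient.\<close>
definition d_stationary :: "nat \<Rightarrow> nat \<Rightarrow> (real mat \<Rightarrow> real) \<Rightarrow> real \<Rightarrow> nat \<Rightarrow> real mat set \<Rightarrow> real mat \<Rightarrow> bool" where
  "d_stationary m n f \<gamma> K C X \<longleftrightarrow> X \<in> C \<and>
     (\<forall>D\<in>feas_cone m n X C. \<exists>L. has_dir_deriv (\<lambda>Y. f Y + \<gamma> * trunc_nuc K Y) X D L \<and> 0 \<le> L)"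

end

theory Submission
  imports Defs "Jordan_Normal_Form.Char_Poly" "HOL-Combinatorics.Permutations"
begin

lemma rect_diag_carrier[simp]: "rect_diag m n s \<in> carrier_mat m n"
  unfolding rect_diag_def by simp

lemma rd_dims[simp]: "dim_row (rect_diag m n s) = m" "dim_col (rect_diag m n s) = n"
  unfolding rect_diag_def by simp_all

lemma orth_right: assumes "orth_mat k U" shows "U * transpose_mat U = 1\<^sub>m k"
  using assms unfolding orth_mat_def
  by (metis mat_mult_left_right_inverse transpose_carrier_mat)

lemma orth_carrier: "orth_mat k U \<Longrightarrow> U \<in> carrier_mat k k"
  unfolding orth_mat_def by simp

definition dsq :: "nat \<Rightarrow> real list \<Rightarrow> real mat" where
  "dsq m s = mat m m (\<lambda>(i,j). if i = j then (s ! i)^2 else 0)"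

lemma rect_diag_sq:
  assumes "length s = m" "m \<le> n"
  shows "rect_diag m n s * transpose_mat (rect_diag m n s) = dsq m s"
proof (rule eq_matI)
  fix i j assume ij: "i < dim_row (dsq m s)" "j < dim_col (dsq m s)"
  hence "i < m" "j < m" by (auto simp: dsq_def)
  have "(rect_diag m n s * transpose_mat (rect_diag m n s)) $$ (i,j)
      = (\<Sum>k\<in>{0..<n}. (if i = k \<and> i < length s then s ! i else 0) * (if j = k \<and> j < length s then s ! j else 0))"
    using \<open>i<m\<close> \<open>j<m\<close> assms unfolding rect_diag_def
    by (auto simp: scalar_prod_def intro!: sum.cong)
  also have "\<dots> = (\<Sum>k\<in>{0..<n}. if k = i then (if i = j then (s!i)^2 else 0) else 0)"
    using \<open>i<m\<close> \<open>j<m\<close> assms by (intro sum.cong) (auto simp: power2_eq_square)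
  also have "\<dots> = dsq m s $$ (i,j)"
    using \<open>i<m\<close> \<open>j<m\<close> assms by (simp add: dsq_def)
  finally show "(rect_diag m n s * transpose_mat (rect_diag m n s)) $$ (i,j) = dsq m s $$ (i,j)" .
qed (auto simp: dsq_def rect_diag_def)

lemma char_poly_dsq: "char_poly (dsq m s) = (\<Prod>a\<leftarrow>map (\<lambda>i. (s ! i)^2) [0..<m]. [:- a, 1:])"
proof -
  have "dsq m s \<in> carrier_mat m m" "upper_triangular (dsq m s)"
    by (auto simp: dsq_def upper_triangular_def)
  from char_poly_upper_triangular[OF this]
  moreover have "(\<Prod>x\<leftarrow>[0..<m]. [:- dsq m s $$ (x,x), 1:]) = (\<Prod>x\<leftarrow>[0..<m]. [:- ((s ! x)^2), 1:])"
    by (intro arg_cong[where f=prod_list] map_cong) (auto simp: dsq_def)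
  moreover have "dim_row (dsq m s) = m" by (simp add: dsq_def)
  ultimately show ?thesis by (simp add: diag_mat_def comp_def)
qed

lemma prod_linear_mset:
  "(\<Prod>a\<leftarrow>xs. [:- a, 1:]) = (\<Prod>a\<leftarrow>ys. [:- a, (1::real):]) \<Longrightarrow> mset xs = mset ys"
proof -
  have cnt: "count (mset zs) a = order a (\<Prod>a\<leftarrow>zs. [:- a, (1::real):])" for zs a
  proof (induct zs)
    case (Cons b zs)
    have "order a (\<Prod>a\<leftarrow>b#zs. [:- a, (1::real):]) = order a ([:-b,1:] * (\<Prod>a\<leftarrow>zs. [:- a, (1::real):]))" by simp
    also have "\<dots> = order a ([:-b,1:]) + order a (\<Prod>a\<leftarrow>zs. [:- a, (1::real):])"
    proof (rule order_mult)
      have "(\<Prod>a\<leftarrow>zs. [:- a, (1::real):]) \<noteq> 0" unfolding prod_list_zero_iff by auto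
      moreover have "[:-b,1::real:] \<noteq> 0" by simp
      ultimately show "[:-b,1:] * (\<Prod>a\<leftarrow>zs. [:- a, (1::real):]) \<noteq> 0" by (metis mult_eq_0_iff)
    qed
    also have "order a ([:-b,1::real:]) = (if a = b then 1 else 0)"
      using order_linear_power[of a "-b" 1] by simp
    finally show ?case using Cons by auto
  qed simp
  assume "(\<Prod>a\<leftarrow>xs. [:- a, 1:]) = (\<Prod>a\<leftarrow>ys. [:- a, (1::real):])"
  thus ?thesis by (intro multiset_eqI) (simp add: cnt)
qed

lemma gram:
  fixes U R W :: "real mat"
  assumes U: "U \<in> carrier_mat m m" and R: "R \<in> carrier_mat m n" and W: "W \<in> carrier_mat n n"
    and WW: "transpose_mat W * W = 1\<^sub>m n"
  shows "(U * R * transpose_mat W) * transpose_mat (U * R * transpose_mat W) = U * (R * transpose_mat R) * transpose_mat U"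
proof -
  have Wt: "transpose_mat W \<in> carrier_mat n n" using W by simp
  have Rt: "transpose_mat R \<in> carrier_mat n m" using R by simp
  have Ut: "transpose_mat U \<in> carrier_mat m m" using U by simp
  have UR: "U * R \<in> carrier_mat m n" using U R by (rule mult_carrier_mat)
  have RU: "transpose_mat R * transpose_mat U \<in> carrier_mat n m" using Rt Ut by (rule mult_carrier_mat)
  have RR: "R * transpose_mat R \<in> carrier_mat m m" using R Rt by (rule mult_carrier_mat)
  have "transpose_mat (U * R * transpose_mat W) = transpose_mat (transpose_mat W) * transpose_mat (U * R)"
    by (rule transpose_mult[OF UR Wt])
  also have "\<dots> = W * (transpose_mat R * transpose_mat U)"
    by (simp add: transpose_mult[OF U R])
  finally have T: "transpose_mat (U * R * transpose_mat W) = W * (transpose_mat R * transpose_mat U)" .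
  have WX: "W * (transpose_mat R * transpose_mat U) \<in> carrier_mat n m" using W RU by (rule mult_carrier_mat)
  have "(U * R * transpose_mat W) * transpose_mat (U * R * transpose_mat W)
      = (U * R * transpose_mat W) * (W * (transpose_mat R * transpose_mat U))" by (simp only: T)
  also have "\<dots> = (U * R) * (transpose_mat W * (W * (transpose_mat R * transpose_mat U)))"
    by (rule assoc_mult_mat[OF UR Wt WX])
  also have "transpose_mat W * (W * (transpose_mat R * transpose_mat U)) = (transpose_mat W * W) * (transpose_mat R * transpose_mat U)"
    by (rule assoc_mult_mat[OF Wt W RU, symmetric])
  also have "\<dots> = transpose_mat R * transpose_mat U" unfolding WW by (rule left_mult_one_mat[OF RU])
  also have "(U * R) * (transpose_mat R * transpose_mat U) = U * (R * (transpose_mat R * transpose_mat U))"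
    by (rule assoc_mult_mat[OF U R RU])
  also have "R * (transpose_mat R * transpose_mat U) = (R * transpose_mat R) * transpose_mat U"
    by (rule assoc_mult_mat[OF R Rt Ut, symmetric])
  also have "U * ((R * transpose_mat R) * transpose_mat U) = U * (R * transpose_mat R) * transpose_mat U"
    by (rule assoc_mult_mat[OF U RR Ut, symmetric])
  finally show ?thesis .
qed

lemma svd_mset_unique:
  assumes U: "orth_mat m U" and V: "orth_mat n V" and U': "orth_mat m U'" and V': "orth_mat n V'"
    and ls: "length s = m" and ls': "length s' = m" and mn: "m \<le> n"
    and nn: "\<forall>i<length s. 0 \<le> s ! i" and nn': "\<forall>i<length s'. 0 \<le> s' ! i"
    and eq: "U * rect_diag m n s * transpose_mat V = U' * rect_diag m n s' * transpose_mat V'"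
  shows "mset s = mset s'"
proof -
  have cp: "char_poly ((U * rect_diag m n s * transpose_mat V) * transpose_mat (U * rect_diag m n s * transpose_mat V)) = char_poly (dsq m s)"
    if U: "orth_mat m U" and V: "orth_mat n V" and ls: "length s = m" for U V s
  proof -
    have Uc: "U \<in> carrier_mat m m" "V \<in> carrier_mat n n" using U V by (auto simp: orth_mat_def)
    have VV: "transpose_mat V * V = 1\<^sub>m n" using V by (simp add: orth_mat_def)
    have "(U * rect_diag m n s * transpose_mat V) * transpose_mat (U * rect_diag m n s * transpose_mat V)
        = U * (rect_diag m n s * transpose_mat (rect_diag m n s)) * transpose_mat U"
      by (rule gram[OF Uc(1) rect_diag_carrier Uc(2) VV])
    also have "\<dots> = U * dsq m s * transpose_mat U" by (simp only: rect_diag_sq[OF ls mn])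
    finally have e1: "(U * rect_diag m n s * transpose_mat V) * transpose_mat (U * rect_diag m n s * transpose_mat V)
        = U * dsq m s * transpose_mat U" .
    have "similar_mat (U * dsq m s * transpose_mat U) (dsq m s)"
    proof (rule similar_matI[of _ _ _ _ m])
      have Ut: "transpose_mat U \<in> carrier_mat m m" using Uc by simp
      have D: "dsq m s \<in> carrier_mat m m" by (simp add: dsq_def)
      have "U * dsq m s \<in> carrier_mat m m" using Uc(1) D by (rule mult_carrier_mat)
      hence "U * dsq m s * transpose_mat U \<in> carrier_mat m m" using Ut by (rule mult_carrier_mat)
      thus "{U * dsq m s * transpose_mat U, dsq m s, U, transpose_mat U} \<subseteq> carrier_mat m m"
        using Uc(1) Ut D by blast
      show "U * transpose_mat U = 1\<^sub>m m" by (rule orth_right[OF U])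
      show "transpose_mat U * U = 1\<^sub>m m" using U by (simp add: orth_mat_def)
    qed (rule refl)
    from char_poly_similar[OF this] show ?thesis by (simp only: e1)
  qed
  note c1 = cp[OF U V ls, unfolded eq]
  note c2 = cp[OF U' V' ls']
  have "char_poly (dsq m s) = char_poly (dsq m s')"
    by (subst c1[symmetric], subst c2, rule refl)
  hence h: "mset (map (\<lambda>i. (s ! i)^2) [0..<m]) = mset (map (\<lambda>i. (s' ! i)^2) [0..<m])"
    unfolding char_poly_dsq by (rule prod_linear_mset)
  have mn: "map (\<lambda>i. (t ! i)^2) [0..<length t] = map (\<lambda>x. x^2) t" for t :: "real list"
    by (rule nth_equalityI) auto
  have sq: "mset (map (\<lambda>x. x^2) s) = mset (map (\<lambda>x. x^2) s')"
    using h ls ls' mn[of s] mn[of s'] by metis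
  have bk: "map sqrt (map (\<lambda>x. x^2) t) = t" if "\<forall>i<length t. 0 \<le> t ! i" for t :: "real list"
    using that by (auto intro!: map_idI simp: in_set_conv_nth)
  have "mset s = mset (map sqrt (map (\<lambda>x. x^2) s))" using bk[OF nn] by simp
  also have "\<dots> = image_mset sqrt (mset (map (\<lambda>x. x^2) s))" by (rule mset_map)
  also have "\<dots> = image_mset sqrt (mset (map (\<lambda>x. x^2) s'))" by (simp only: sq)
  also have "\<dots> = mset (map sqrt (map (\<lambda>x. x^2) s'))" by (rule mset_map[symmetric])
  also have "\<dots> = mset s'" using bk[OF nn'] by simp
  finally show ?thesis .
qed

lemma sorted_desc_eq:
  fixes xs ys :: "real list"
  assumes "sorted_wrt (\<ge>) xs" "sorted_wrt (\<ge>) ys" "mset xs = mset ys"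
  shows "xs = ys"
proof -
  have a: "sorted (rev xs)" "sorted (rev ys)" using assms(1,2) by (simp_all add: sorted_wrt_rev)
  have b: "mset (rev xs) = mset (rev ys)" using assms(3) by simp
  have "sort (rev ys) = rev xs" by (rule properties_for_sort) (use a b in auto)
  moreover have "sort (rev ys) = rev ys" by (rule properties_for_sort) (use a in auto)
  ultimately show ?thesis by simp
qed

lemma svals_eq:
  assumes svd: "is_svd X U s V" and mn: "dim_row X \<le> dim_col X"
  shows "svals X = s"
  unfolding svals_def
proof (rule the_equality)
  show "\<exists>U V. is_svd X U s V" using svd by blast
  fix s' assume "\<exists>U V. is_svd X U s' V"
  then obtain U' V' where svd': "is_svd X U' s' V'" by blast
  have "mset s' = mset s"
    by (rule svd_mset_unique[of "dim_row X" U' "dim_col X" V' U V])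
      (use svd svd' mn in \<open>auto simp: is_svd_def Let_def\<close>)
  thus "s' = s" using svd svd' sorted_desc_eq unfolding is_svd_def Let_def by blast
qed

definition pmat :: "nat \<Rightarrow> (nat \<Rightarrow> nat) \<Rightarrow> real mat" where
  "pmat k p = mat k k (\<lambda>(i,j). if i = p j then 1 else 0)"

lemma pmat_dims[simp]: "dim_row (pmat k p) = k" "dim_col (pmat k p) = k" by (simp_all add: pmat_def)

lemma pmat_carrier[simp]: "pmat k p \<in> carrier_mat k k" by (simp add: pmat_def)

lemma permutes_lt: fixes p :: "nat \<Rightarrow> nat" assumes p: "p permutes {..<m}" and mk: "m \<le> k" and ik: "i < k" shows "p i < k"
proof (cases "i < m")
  case True
  hence "p i \<in> {..<m}" using permutes_in_image[OF p, of i] by simp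
  hence "p i < m" by simp
  thus ?thesis using mk by linarith
next
  case False
  hence "p i = i" using permutes_not_in[OF p, of i] by simp
  thus ?thesis using ik by simp
qed

lemma pmat_orth: assumes p: "p permutes {..<m}" and k: "m \<le> k" shows "orth_mat k (pmat k p)"
  unfolding orth_mat_def
proof (intro conjI)
  show "pmat k p \<in> carrier_mat k k" by simp
  show "transpose_mat (pmat k p) * pmat k p = 1\<^sub>m k"
  proof (rule eq_matI)
    fix i j assume "i < dim_row (1\<^sub>m k)" "j < dim_col (1\<^sub>m k)"
    hence ij: "i < k" "j < k" by auto
    have inj: "inj p" using permutes_inj[OF p] .
    have "(transpose_mat (pmat k p) * pmat k p) $$ (i,j) = (\<Sum>a\<in>{0..<k}. (if a = p i then 1 else 0) * (if a = p j then 1 else 0))"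
      using ij by (simp add: pmat_def scalar_prod_def)
    also have "\<dots> = (\<Sum>a\<in>{0..<k}. if a = p i then (if p i = p j then 1 else 0) else 0)"
      by (rule sum.cong) auto
    also have "\<dots> = (if p i = p j then 1 else 0)"
      using permutes_lt[OF p k ij(1)] by simp
    also have "\<dots> = (if i = j then 1 else 0)"
      using inj by (simp add: inj_eq)
    finally show "(transpose_mat (pmat k p) * pmat k p) $$ (i,j) = 1\<^sub>m k $$ (i,j)" using ij by simp
  qed (auto simp: pmat_def)
qed

lemma pmat_rd:
  assumes p: "p permutes {..<length s}" and ls: "length s = m" and mn: "m \<le> n"
  shows "transpose_mat (pmat m p) * rect_diag m n s * pmat n p = rect_diag m n (permute_list p s)"
proof -
  have p': "p permutes {..<m}" using p ls by simp
  have inj: "inj p" using permutes_inj[OF p] .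
  have A: "transpose_mat (pmat m p) * rect_diag m n s = mat m n (\<lambda>(i,b). rect_diag m n s $$ (p i, b))"
  proof (rule eq_matI)
    fix i b assume "i < dim_row (mat m n (\<lambda>(i,b). rect_diag m n s $$ (p i, b)))" "b < dim_col (mat m n (\<lambda>(i,b). rect_diag m n s $$ (p i, b)))"
    hence ib: "i < m" "b < n" by auto
    have pi: "p i < m" using permutes_lt[OF p' le_refl ib(1)] .
    have "(transpose_mat (pmat m p) * rect_diag m n s) $$ (i,b) = (\<Sum>a\<in>{0..<m}. (if a = p i then 1 else 0) * rect_diag m n s $$ (a, b))"
      using ib by (simp add: pmat_def scalar_prod_def)
    also have "\<dots> = (\<Sum>a\<in>{0..<m}. if a = p i then rect_diag m n s $$ (p i, b) else 0)"
      by (rule sum.cong) auto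
    also have "\<dots> = rect_diag m n s $$ (p i, b)" using pi by simp
    finally show "(transpose_mat (pmat m p) * rect_diag m n s) $$ (i,b) = mat m n (\<lambda>(i,b). rect_diag m n s $$ (p i, b)) $$ (i,b)"
      using ib by simp
  qed auto
  show ?thesis unfolding A
  proof (rule eq_matI)
    fix i j assume "i < dim_row (rect_diag m n (permute_list p s))" "j < dim_col (rect_diag m n (permute_list p s))"
    hence ij: "i < m" "j < n" by (auto simp: rect_diag_def)
    have pi: "p i < m" using permutes_lt[OF p' le_refl ij(1)] .
    have pj: "p j < n" using permutes_lt[OF p' mn ij(2)] .
    have "(mat m n (\<lambda>(i,b). rect_diag m n s $$ (p i, b)) * pmat n p) $$ (i,j) = (\<Sum>b\<in>{0..<n}. rect_diag m n s $$ (p i, b) * (if b = p j then 1 else 0))"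
      using ij pi by (simp add: pmat_def scalar_prod_def)
    also have "\<dots> = (\<Sum>b\<in>{0..<n}. if b = p j then rect_diag m n s $$ (p i, p j) else 0)"
      by (rule sum.cong) auto
    also have "\<dots> = rect_diag m n s $$ (p i, p j)" using pj by simp
    also have "\<dots> = rect_diag m n (permute_list p s) $$ (i,j)"
      using pi pj ij ls inj permute_list_nth[OF p] by (auto simp: rect_diag_def inj_eq)
    finally show "(mat m n (\<lambda>(i,b). rect_diag m n s $$ (p i, b)) * pmat n p) $$ (i,j) = rect_diag m n (permute_list p s) $$ (i,j)" .
  qed (auto simp: rect_diag_def)
qed

lemma orth_mult:
  fixes A B :: "real mat"
  assumes A: "orth_mat k A" and B: "orth_mat k B"
  shows "orth_mat k (A * B)"
proof -
  have Ac: "A \<in> carrier_mat k k" and Bc: "B \<in> carrier_mat k k" using A B by (auto simp: orth_mat_def)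
  have At: "transpose_mat A \<in> carrier_mat k k" and Bt: "transpose_mat B \<in> carrier_mat k k" using Ac Bc by auto
  have AB: "A * B \<in> carrier_mat k k" using Ac Bc by (rule mult_carrier_mat)
  have "transpose_mat (A * B) * (A * B) = (transpose_mat B * transpose_mat A) * (A * B)"
    by (simp only: transpose_mult[OF Ac Bc])
  also have "\<dots> = transpose_mat B * (transpose_mat A * (A * B))" by (rule assoc_mult_mat[OF Bt At AB])
  also have "transpose_mat A * (A * B) = (transpose_mat A * A) * B" by (rule assoc_mult_mat[OF At Ac Bc, symmetric])
  also have "\<dots> = B" using A Bc by (simp add: orth_mat_def)
  also have "transpose_mat B * B = 1\<^sub>m k" using B by (simp add: orth_mat_def)
  finally show ?thesis using AB by (simp add: orth_mat_def)
qed

lemma orth_transpose: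
  fixes A :: "real mat"
  assumes A: "orth_mat k A" shows "orth_mat k (transpose_mat A)"
  using A orth_right[OF A] by (simp add: orth_mat_def)

lemma nuc_decomp:
  fixes U V :: "real mat"
  assumes U: "orth_mat m U" and V: "orth_mat n V" and ls: "length s = m" and mn: "m \<le> n"
    and nn: "\<forall>i<length s. 0 \<le> s ! i"
  shows "nuc_norm (U * rect_diag m n s * transpose_mat V) = sum_list s"
proof -
  define s' where "s' = rev (sort s)"
  have ms: "mset s = mset s'" unfolding s'_def by simp
  obtain p where p: "p permutes {..<length s'}" and ps: "permute_list p s' = s"
    using mset_eq_permutation[OF ms] by blast
  have ls': "length s' = m" unfolding s'_def using ls by simp
  define P where "P = pmat m p"
  define Q where "Q = pmat n p"
  have p': "p permutes {..<m}" using p ls' by simp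
  have R: "transpose_mat P * rect_diag m n s' * Q = rect_diag m n s"
    unfolding P_def Q_def using pmat_rd[OF p ls' mn] ps by simp
  have Uc: "U \<in> carrier_mat m m" and Vc: "V \<in> carrier_mat n n" using U V by (auto simp: orth_mat_def)
  have Pt: "transpose_mat P \<in> carrier_mat m m" and Qc: "Q \<in> carrier_mat n n"
    and Qt: "transpose_mat Q \<in> carrier_mat n n" unfolding P_def Q_def by auto
  have Vt: "transpose_mat V \<in> carrier_mat n n" using Vc by simp
  have R': "rect_diag m n s' \<in> carrier_mat m n" by simp
  have A: "transpose_mat P * rect_diag m n s' \<in> carrier_mat m n" using Pt R' by (rule mult_carrier_mat)
  have UA: "U * (transpose_mat P * rect_diag m n s') \<in> carrier_mat m n" using Uc A by (rule mult_carrier_mat)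
  have X: "U * rect_diag m n s * transpose_mat V
      = (U * transpose_mat P) * rect_diag m n s' * transpose_mat (V * transpose_mat Q)"
  proof -
    have "transpose_mat (V * transpose_mat Q) = Q * transpose_mat V"
      using transpose_mult[OF Vc Qt] by simp
    moreover have "(U * transpose_mat P) * rect_diag m n s' = U * (transpose_mat P * rect_diag m n s')"
      by (rule assoc_mult_mat[OF Uc Pt R'])
    moreover have "(U * (transpose_mat P * rect_diag m n s')) * (Q * transpose_mat V)
        = ((U * (transpose_mat P * rect_diag m n s')) * Q) * transpose_mat V"
      by (rule assoc_mult_mat[OF UA Qc Vt, symmetric])
    moreover have "(U * (transpose_mat P * rect_diag m n s')) * Q = U * ((transpose_mat P * rect_diag m n s') * Q)"
      by (rule assoc_mult_mat[OF Uc A Qc])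
    ultimately show ?thesis using R by simp
  qed
  have oU: "orth_mat m (U * transpose_mat P)"
    using orth_mult[OF U orth_transpose[OF pmat_orth[OF p' le_refl]]] unfolding P_def .
  have oV: "orth_mat n (V * transpose_mat Q)"
    using orth_mult[OF V orth_transpose[OF pmat_orth[OF p' mn]]] unfolding Q_def .
  have Xc: "U * rect_diag m n s * transpose_mat V \<in> carrier_mat m n"
    by (rule mult_carrier_mat[OF mult_carrier_mat[OF Uc rect_diag_carrier] Vt])
  have "is_svd (U * rect_diag m n s * transpose_mat V) (U * transpose_mat P) s' (V * transpose_mat Q)"
    unfolding is_svd_def Let_def
  proof (intro conjI)
    show "orth_mat (dim_row (U * rect_diag m n s * transpose_mat V)) (U * transpose_mat P)" using Xc oU Uc by simp
    show "orth_mat (dim_col (U * rect_diag m n s * transpose_mat V)) (V * transpose_mat Q)" using Xc oV Vc by simp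
    show "length s' = min (dim_row (U * rect_diag m n s * transpose_mat V)) (dim_col (U * rect_diag m n s * transpose_mat V))"
      using Xc ls' mn Uc Vc by simp
    have "set s' = set s" unfolding s'_def by simp
    thus "\<forall>i<length s'. 0 \<le> s' ! i" using nn by (metis in_set_conv_nth)
    show "sorted_wrt (\<ge>) s'" unfolding s'_def
      using sorted_sort[of s] by (simp add: sorted_wrt_rev)
    show "U * rect_diag m n s * transpose_mat V =
      U * transpose_mat P * rect_diag (dim_row (U * rect_diag m n s * transpose_mat V)) (dim_col (U * rect_diag m n s * transpose_mat V)) s' * transpose_mat (V * transpose_mat Q)"
      using Xc X Uc Vc by simp
  qed
  hence "svals (U * rect_diag m n s * transpose_mat V) = s'"
    by (rule svals_eq) (use Xc mn Uc Vc in simp)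
  hence "nuc_norm (U * rect_diag m n s * transpose_mat V) = sum_list s'" by (simp add: nuc_norm_def)
  also have "\<dots> = sum_list s" using ms by (metis sum_mset_sum_list)
  finally show ?thesis .
qed

lemma sm_lem:
  fixes U B W :: "real mat"
  assumes U: "U \<in> carrier_mat m m" and B: "B \<in> carrier_mat m n" and W: "W \<in> carrier_mat n n"
  shows "U * (c \<cdot>\<^sub>m B) * W = c \<cdot>\<^sub>m (U * B * W)"
  by (simp add: mult_smult_distrib[OF U B] mult_smult_assoc_mat[OF mult_carrier_mat[OF U B] W])

lemma lin_lem:
  fixes U A B W :: "real mat"
  assumes U: "U \<in> carrier_mat m m" and A: "A \<in> carrier_mat m n" and B: "B \<in> carrier_mat m n" and W: "W \<in> carrier_mat n n"
  shows "U * (A + B) * W = U * A * W + U * B * W"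
  by (simp add: mult_add_distrib_mat[OF U A B] add_mult_distrib_mat[OF mult_carrier_mat[OF U A] mult_carrier_mat[OF U B] W])

theorem mainTheorem16:
  fixes m n K :: nat and \<gamma> M :: real and f :: "real mat \<Rightarrow> real"
    and C :: "real mat set" and Xs :: "real mat"
  assumes "m \<le> n" and "K < m" and "\<gamma> > 0"
    and "C \<subseteq> carrier_mat m n"
    and "cond_C1 m n K C"
    and "dir_diff_on m n f C"
    and "\<forall>X\<in>C. \<forall>Y\<in>C. \<bar>f X - f Y\<bar> \<le> M * nuc_norm (X - Y)"
    and "d_stationary m n f \<gamma> K C Xs"
    and "\<gamma> > M"
  shows "trunc_nuc K Xs = 0"
proof -
  note mn = assms(1) and Km = assms(2) and CC = assms(4) and lip = assms(7)
  have XsC: "Xs \<in> C" and stat: "\<forall>D\<in>feas_cone m n Xs C. \<exists>L. has_dir_deriv (\<lambda>Y. f Y + \<gamma> * trunc_nuc K Y) Xs D L \<and> 0 \<le> L"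
    using assms(8) unfolding d_stationary_def by auto
  have Xc: "Xs \<in> carrier_mat m n" using XsC CC by auto
  define s where "s = svals Xs"
  define z where "z = replicate K 0 @ drop K s"
  obtain U V where svd: "is_svd Xs U s V"
    and Df: "- (U * rect_diag m n z * transpose_mat V) \<in> feas_cone m n Xs C"
    using assms(5) XsC unfolding cond_C1_def s_def z_def by blast
  have dims: "dim_row Xs = m" "dim_col Xs = n" using Xc by auto
  have U: "orth_mat m U" and V: "orth_mat n V" and ls: "length s = m"
    and nn: "\<forall>i<length s. 0 \<le> s ! i" and srt: "sorted_wrt (\<ge>) s"
    and Xeq: "Xs = U * rect_diag m n s * transpose_mat V"
    using svd mn unfolding is_svd_def Let_def dims by auto
  have Uc: "U \<in> carrier_mat m m" and Vc: "V \<in> carrier_mat n n" using U V by (auto simp: orth_mat_def)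
  have Vt: "transpose_mat V \<in> carrier_mat n n" using Vc by simp
  define G where "G = U * rect_diag m n z * transpose_mat V"
  have Gc: "G \<in> carrier_mat m n" unfolding G_def
    by (rule mult_carrier_mat[OF mult_carrier_mat[OF Uc rect_diag_carrier] Vt])
  define T where "T = sum_list (drop K s)"
  have TK: "trunc_nuc K Xs = T" unfolding T_def trunc_nuc_def s_def ..
  have nnset: "\<And>x. x \<in> set s \<Longrightarrow> 0 \<le> x" using nn by (metis in_set_conv_nth)
  have T0: "0 \<le> T" unfolding T_def by (rule sum_list_nonneg) (meson in_set_dropD nnset)
  obtain t' where t': "t' > 0" and feas: "\<And>t. 0 < t \<Longrightarrow> t < t' \<Longrightarrow> Xs + t \<cdot>\<^sub>m (- G) \<in> C"
    using Df unfolding feas_cone_def G_def by blast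
  obtain L where L: "has_dir_deriv (\<lambda>Y. f Y + \<gamma> * trunc_nuc K Y) Xs (- G) L" and L0: "0 \<le> L"
    using stat Df unfolding G_def by blast
  have znth: "z ! i = (if i < K then 0 else s ! i)" if "i < m" for i
    using that Km ls unfolding z_def by (simp add: nth_append)
  have lz: "length z = m" unfolding z_def using Km ls by simp
  have sumz: "sum_list z = T" unfolding z_def T_def by (simp add: sum_list_replicate)
  have nnz: "\<forall>i<length (map (\<lambda>x. t * x) z). 0 \<le> map (\<lambda>x. t * x) z ! i" if "0 \<le> t" for t
    using that nn lz ls znth by auto
  define st where "st t = take K s @ map (\<lambda>x. (1 - t) * x) (drop K s)" for t
  have lst: "length (st t) = m" for t unfolding st_def using Km ls by simp
  have stnth: "st t ! i = (if i < K then s ! i else (1 - t) * s ! i)" if "i < m" for t i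
    using that Km ls unfolding st_def by (simp add: nth_append)
  have step: "f (Xs + t \<cdot>\<^sub>m (- G)) + \<gamma> * trunc_nuc K (Xs + t \<cdot>\<^sub>m (- G)) - (f Xs + \<gamma> * trunc_nuc K Xs)
      \<le> t * ((M - \<gamma>) * T)" if t: "0 < t" "t < t'" "t < 1" for t
  proof -
    have e1: "Xs + t \<cdot>\<^sub>m (- G) = U * rect_diag m n (st t) * transpose_mat V"
    proof -
      have "rect_diag m n (st t) = rect_diag m n s + (- t) \<cdot>\<^sub>m rect_diag m n z"
        by (rule eq_matI) (auto simp: rect_diag_def lst ls lz stnth znth algebra_simps)
      hence "U * rect_diag m n (st t) * transpose_mat V = Xs + (- t) \<cdot>\<^sub>m G"
        unfolding Xeq G_def
        by (simp add: lin_lem[OF Uc rect_diag_carrier smult_carrier_mat[OF rect_diag_carrier] Vt] sm_lem[OF Uc rect_diag_carrier Vt])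
      moreover have "t \<cdot>\<^sub>m (- G) = (- t) \<cdot>\<^sub>m G" by (rule eq_matI) (use Gc in auto)
      ultimately show ?thesis by simp
    qed
    have e2: "Xs - (Xs + t \<cdot>\<^sub>m (- G)) = U * rect_diag m n (map (\<lambda>x. t * x) z) * transpose_mat V"
    proof -
      have "rect_diag m n (map (\<lambda>x. t * x) z) = t \<cdot>\<^sub>m rect_diag m n z"
        by (rule eq_matI) (auto simp: rect_diag_def lz)
      hence "U * rect_diag m n (map (\<lambda>x. t * x) z) * transpose_mat V = t \<cdot>\<^sub>m G"
        unfolding G_def by (simp add: sm_lem[OF Uc rect_diag_carrier Vt])
      moreover have "Xs - (Xs + t \<cdot>\<^sub>m (- G)) = t \<cdot>\<^sub>m G" by (rule eq_matI) (use Gc Xc in auto)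
      ultimately show ?thesis by simp
    qed
    have nuc: "nuc_norm (Xs - (Xs + t \<cdot>\<^sub>m (- G))) = t * T"
      unfolding e2 using nuc_decomp[OF U V _ mn nnz] t lz sumz by (simp add: sum_list_const_mult)
    have "is_svd (U * rect_diag m n (st t) * transpose_mat V) U (st t) V"
    proof -
      have Pc: "U * rect_diag m n (st t) * transpose_mat V \<in> carrier_mat m n"
        by (rule mult_carrier_mat[OF mult_carrier_mat[OF Uc rect_diag_carrier] Vt])
      have sn: "\<forall>i j. i < j \<longrightarrow> j < length s \<longrightarrow> s ! j \<le> s ! i"
        using srt unfolding sorted_wrt_iff_nth_less by auto
      have "sorted_wrt (\<ge>) (st t)" unfolding sorted_wrt_iff_nth_less
      proof (intro allI impI)
        fix i j assume ij: "i < j" "j < length (st t)"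
        hence ij': "i < m" "j < m" using lst by auto
        have sj: "0 \<le> s ! j" using nn ij' ls by auto
        have sji: "s ! j \<le> s ! i" using sn ij ij' ls by auto
        show "st t ! j \<le> st t ! i"
          using ij' ij sj sji t unfolding stnth[OF ij'(1)] stnth[OF ij'(2)]
          by (auto intro: mult_left_mono) (smt (verit) mult_left_le_one_le)+
      qed
      moreover have "\<forall>i<length (st t). 0 \<le> st t ! i"
        using nn ls lst stnth t by auto
      ultimately show ?thesis unfolding is_svd_def Let_def using Pc U V Uc Vc lst mn by simp
    qed
    hence sv: "svals (Xs + t \<cdot>\<^sub>m (- G)) = st t" unfolding e1
      by (rule svals_eq) (use Uc Vc mn in simp)
    have tr: "trunc_nuc K (Xs + t \<cdot>\<^sub>m (- G)) = (1 - t) * T"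
      unfolding trunc_nuc_def sv st_def T_def using Km ls by (simp add: sum_list_const_mult)
    have inC: "Xs + t \<cdot>\<^sub>m (- G) \<in> C" using feas t by auto
    have "\<bar>f Xs - f (Xs + t \<cdot>\<^sub>m (- G))\<bar> \<le> M * nuc_norm (Xs - (Xs + t \<cdot>\<^sub>m (- G)))"
      using lip XsC inC by blast
    hence "f (Xs + t \<cdot>\<^sub>m (- G)) - f Xs \<le> M * (t * T)" unfolding nuc by linarith
    thus ?thesis unfolding tr TK by (simp add: algebra_simps)
  qed
  have ev: "eventually (\<lambda>t. (f (Xs + t \<cdot>\<^sub>m (- G)) + \<gamma> * trunc_nuc K (Xs + t \<cdot>\<^sub>m (- G)) - (f Xs + \<gamma> * trunc_nuc K Xs)) / t
      \<le> (M - \<gamma>) * T) (at_right 0)"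
    unfolding eventually_at_right_field
  proof (intro exI[of _ "min t' 1"] conjI allI impI)
    show "(0::real) < min t' 1" using t' by simp
    fix t :: real assume "0 < t" "t < min t' 1"
    thus "(f (Xs + t \<cdot>\<^sub>m (- G)) + \<gamma> * trunc_nuc K (Xs + t \<cdot>\<^sub>m (- G)) - (f Xs + \<gamma> * trunc_nuc K Xs)) / t \<le> (M - \<gamma>) * T"
      using step[of t] by (simp add: divide_le_eq mult.commute)
  qed
  have "L \<le> (M - \<gamma>) * T"
    by (rule tendsto_upperbound[OF L[unfolded has_dir_deriv_def] ev]) simp
  hence le: "0 \<le> (M - \<gamma>) * T" using L0 by linarith
  have "T \<le> 0"
  proof (rule ccontr)
    assume "\<not> T \<le> 0"
    hence "(M - \<gamma>) * T < 0" using assms(9) by (intro mult_neg_pos) auto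
    thus False using le by linarith
  qed
  thus ?thesis using T0 TK by simp
qed

end
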